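(* Let $n\geqslant 3$ and $m\geqslant 1$ be integers, let $I_m=(i_1,\ldots,i_m)$ be a vector of $m$ pairwise different elements of $\{1,\ldots,n\}$, and let $P_m=((j_1,k_1),\ldots,(j_m,k_m))$ be a vector of $m$ pairs formed by $2m$ pairwise different elements of $\{2,\ldots,n\}$. Then the function $f_{I_m}^{P_m}$ is an eigenfunction of the Star graph $S_n$ with eigenvalue $n-m-1$.
   Context: Write a permutation $\pi$ of $\{1,\ldots,n\}$ as the sequence $[\pi_1\pi_2\ldots\pi_n]$. The Star graph $S_n$ has vertex set $\mathrm{Sym}_n$, and two permutations are adjacent iff one is obtained from the other by exchanging the entries in positions $1$ and $i$ for some $2\leqslant i\leqslant n$ (this is the Cayley graph of $\mathrm{Sym}_n$ generated by the transpositions $(1\ i)$, $2\le i\le n$). For a graph $\Gamma$, a function $f:V(\Gamma)\to\mathbb{R}$ is an eigenfunction with eigenvalue $\theta$ if $f\not\equiv 0$ and $\theta f(x)=\sum_{y\in N(x)}f(y)$ for every vertex $x$, where $N(x)$ is the neighbourhood of $x$. The function $f_{I_m}^{P_m}:\mathrm{Sym}_n\to\mathbb{R}$ is defined as follows: $f_{I_m}^{P_m}(\pi)=0$ if there is $t\in\{1,\ldots,m\}$ with $\pi_{j_t}\ne i_t$ and $\pi_{k_t}\ne i_t$; otherwise, for each $t$ exactly one of $\pi_{j_t}=i_t$, $\pi_{k_t}=i_t$ holds, and setting $x_t=1$ if $\pi_{j_t}=i_t$ and $x_t=0$ if $\pi_{k_t}=i_t$, one puts $f_{I_m}^{P_m}(\pi)=1$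 if $(x_1,\ldots,x_m)$ contains an even number of $1$s and $f_{I_m}^{P_m}(\pi)=-1$ if it contains an odd number of $1$s. *)

theory Defs
  imports "HOL-Combinatorics.Combinatorics"
begin

text \<open>Permutations of {1..n} are functions nat => nat permuting {1..n};
  the entry in position p of pi is pi p.\<close>

definition star_vertices :: "nat \<Rightarrow> (nat \<Rightarrow> nat) set" where
  "star_vertices n = {\<pi>. \<pi> permutes {1..n}}"

definition star_neighbours :: "nat \<Rightarrow> (nat \<Rightarrow> nat) \<Rightarrow> (nat \<Rightarrow> nat) set" where
  "star_neighbours n \<pi> = {\<pi> \<circ> transpose 1 i | i. 2 \<le> i \<and> i \<le> n}"

definition is_eigenfunction ::
  "'v set \<Rightarrow> ('v \<Rightarrow> 'v set) \<Rightarrow> ('v \<Rightarrow> real) \<Rightarrow> real \<Rightarrow> bool" where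
  "is_eigenfunction V N f \<theta> \<longleftrightarrow>
     (\<exists>x\<in>V. f x \<noteq> 0) \<and> (\<forall>x\<in>V. \<theta> * f x = (\<Sum>y\<in>N x. f y))"

text \<open>f_{I_m}^{P_m}: I t = i_t, J t = j_t, K t = k_t for t in {1..m}.\<close>
definition f_IP :: "nat \<Rightarrow> (nat \<Rightarrow> nat) \<Rightarrow> (nat \<Rightarrow> nat) \<Rightarrow> (nat \<Rightarrow> nat)
    \<Rightarrow> (nat \<Rightarrow> nat) \<Rightarrow> real" where
  "f_IP m I J K \<pi> =
     (if \<exists>t\<in>{1..m}. \<pi> (J t) \<noteq> I t \<and> \<pi> (K t) \<noteq> I t then 0
      else (-1) ^ card {t\<in>{1..m}. \<pi> (J t) = I t})"

end

theory Submission
  imports Defs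
begin

definition gt :: "(nat \<Rightarrow> nat) \<Rightarrow> (nat \<Rightarrow> nat) \<Rightarrow> (nat \<Rightarrow> nat) \<Rightarrow> (nat \<Rightarrow> nat) \<Rightarrow> nat \<Rightarrow> real" where
  "gt I J K \<pi> t = (if \<pi> (J t) = I t then -1 else if \<pi> (K t) = I t then 1 else 0)"

lemma prod_sign:
  assumes "finite A"
  shows "(\<Prod>t\<in>A. if P t then -1 else if Q t then 1 else (0::real))
     = (if \<exists>t\<in>A. \<not> P t \<and> \<not> Q t then 0 else (-1) ^ card {t\<in>A. P t})"
  using assms
proof (induction A rule: finite_induct)
  case empty
  then show ?case by simp
next
  case (insert x A)
  have fin: "finite {t\<in>A. P t}" using insert by simp
  have c: "card {t\<in>insert x A. P t} = (if P x then Suc (card {t\<in>A. P t}) else card {t\<in>A. P t})"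
  proof (cases "P x")
    case True
    then have "{t\<in>insert x A. P t} = insert x {t\<in>A. P t}" by auto
    then show ?thesis using fin insert(2) True by simp
  next
    case False
    then have "{t\<in>insert x A. P t} = {t\<in>A. P t}" by auto
    then show ?thesis using False by simp
  qed
  show ?case using insert(1,2) unfolding c by (simp add: insert(3))
qed

lemma f_prod: "f_IP m I J K \<pi> = (\<Prod>t\<in>{1..m}. gt I J K \<pi> t)"
  unfolding f_IP_def gt_def by (subst prod_sign) auto

lemma exists_good:
  fixes I J :: "nat \<Rightarrow> nat" and n m :: nat
  assumes "\<forall>t\<in>{1..m}. I t \<in> {1..n}" "inj_on I {1..m}"
    "\<forall>t\<in>{1..m}. J t \<in> {1..n}" "inj_on J {1..m}"
  shows "\<exists>\<pi>. \<pi> permutes {1..n} \<and> (\<forall>t\<in>{1..m}. \<pi> (J t) = I t)"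
proof -
  define A where "A = J ` {1..m}"
  define B where "B = I ` {1..m}"
  define h where "h = I \<circ> the_inv_into {1..m} J"
  have bJ: "bij_betw J {1..m} A" using assms A_def by (simp add: bij_betw_def)
  have bI: "bij_betw I {1..m} B" using assms B_def by (simp add: bij_betw_def)
  have bh: "bij_betw h A B" unfolding h_def
    using bij_betw_trans[OF bij_betw_the_inv_into[OF bJ] bI] .
  have hJ: "h (J t) = I t" if "t \<in> {1..m}" for t
    unfolding h_def using the_inv_into_f_f[OF assms(4) that] by simp
  have AS: "A \<subseteq> {1..n}" "B \<subseteq> {1..n}" using assms A_def B_def by auto
  have cAB: "card A = card B" using bij_betw_same_card[OF bJ] bij_betw_same_card[OF bI] by simp
  have "card ({1..n} - A) = card ({1..n} - B)"
    using AS cAB card_Diff_subset[of A "{1..n}"] card_Diff_subset[of B "{1..n}"] finite_subset[OF AS(1) finite_atLeastAtMost[of 1 n]] finite_subset[OF AS(2) finite_atLeastAtMost[of 1 n]] by simp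
  then obtain g where bg: "bij_betw g ({1..n} - A) ({1..n} - B)"
    using finite_same_card_bij by blast
  define \<pi> where "\<pi> x = (if x \<in> A then h x else if x \<in> {1..n} then g x else x)" for x
  have b1: "bij_betw \<pi> A B" using bh by (rule bij_betw_cong[THEN iffD1, rotated]) (simp add: \<pi>_def)
  have b2: "bij_betw \<pi> ({1..n} - A) ({1..n} - B)"
    using bg by (rule bij_betw_cong[THEN iffD1, rotated]) (simp add: \<pi>_def)
  have "bij_betw \<pi> (A \<union> ({1..n} - A)) (B \<union> ({1..n} - B))"
    by (rule bij_betw_combine[OF b1 b2]) auto
  moreover have "A \<union> ({1..n} - A) = {1..n}" "B \<union> ({1..n} - B) = {1..n}" using AS by auto
  ultimately have "bij_betw \<pi> {1..n} {1..n}" by simp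
  then have "\<pi> permutes {1..n}" by (rule bij_imp_permutes) (use AS(1) in \<open>auto simp: \<pi>_def\<close>)
  moreover have "\<forall>t\<in>{1..m}. \<pi> (J t) = I t" using hJ by (simp add: \<pi>_def A_def)
  ultimately show ?thesis by blast
qed

lemma gt_swap:
  assumes "inj \<pi>" "J t \<noteq> K t" "J t \<noteq> 1" "K t \<noteq> 1"
  shows "gt I J K (\<pi> \<circ> transpose 1 (J t)) t + gt I J K (\<pi> \<circ> transpose 1 (K t)) t = gt I J K \<pi> t"
proof -
  have d: "\<pi> 1 \<noteq> \<pi> (J t)" "\<pi> 1 \<noteq> \<pi> (K t)" "\<pi> (J t) \<noteq> \<pi> (K t)"
    using assms by (simp_all add: inj_eq[OF assms(1)])
  have t: "transpose 1 (J t) (K t) = K t" "transpose 1 (K t) (J t) = J t"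
    using assms by (simp_all add: transpose_def)
  show ?thesis using d unfolding gt_def comp_def transpose_apply_second t
    by (cases "\<pi> (J t) = I t"; cases "\<pi> (K t) = I t"; cases "\<pi> 1 = I t") simp_all
qed
lemma gt_other:
  assumes "i \<noteq> J s" "i \<noteq> K s" "J s \<noteq> 1" "K s \<noteq> 1"
  shows "gt I J K (\<pi> \<circ> transpose 1 i) s = gt I J K \<pi> s"
  using assms unfolding gt_def by (simp add: transpose_def)

theorem proposition1:
  fixes n m :: nat and I J K :: "nat \<Rightarrow> nat"
  assumes "n \<ge> 3" and "m \<ge> 1"
    and "\<forall>t\<in>{1..m}. I t \<in> {1..n}"
    and "inj_on I {1..m}"
    and "\<forall>t\<in>{1..m}. J t \<in> {2..n} \<and> K t \<in> {2..n}"
    and "inj_on J {1..m}" and "inj_on K {1..m}"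
    and "J ` {1..m} \<inter> K ` {1..m} = {}"
  shows "is_eigenfunction (star_vertices n) (star_neighbours n) (f_IP m I J K)
           (real n - real m - 1)"
proof -
  define S where "S = {1..m::nat}"
  define F where "F = f_IP m I J K"
  define g where "g = gt I J K"
  have FP: "F p = (\<Prod>t\<in>S. g p t)" for p unfolding F_def g_def S_def by (rule f_prod)
  have J2: "J t \<in> {2..n}" "K t \<in> {2..n}" if "t \<in> S" for t using assms(5) that S_def by auto
  have JK: "J s \<noteq> K t" if "s \<in> S" "t \<in> S" for s t using assms(8) that S_def by blast
  have Jinj: "J s = J t \<longleftrightarrow> s = t" "K s = K t \<longleftrightarrow> s = t" if "s \<in> S" "t \<in> S" for s t
    using assms(6,7) that S_def by (auto dest: inj_onD)
  have ex: "\<exists>x\<in>star_vertices n. F x \<noteq> 0"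
  proof -
    obtain \<pi> where p: "\<pi> permutes {1..n}" "\<forall>t\<in>{1..m}. \<pi> (J t) = I t"
      using exists_good[of m I n J] assms(3,4,5,6) by fastforce
    have "F \<pi> = (\<Prod>t\<in>S. (-1::real))"
      unfolding FP by (rule prod.cong) (use p(2) in \<open>auto simp: g_def gt_def S_def\<close>)
    then have "F \<pi> \<noteq> 0" by simp
    then show ?thesis using p(1) by (auto simp: star_vertices_def)
  qed
  have eq: "(real n - real m - 1) * F \<pi> = (\<Sum>y\<in>star_neighbours n \<pi>. F y)"
    if "\<pi> \<in> star_vertices n" for \<pi>
  proof -
    have pp: "\<pi> permutes {1..n}" using that by (simp add: star_vertices_def)
    then have ip: "inj \<pi>" by (rule permutes_inj)
    define \<sigma> where "\<sigma> i = \<pi> \<circ> transpose 1 i" for i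
    have Nb: "star_neighbours n \<pi> = \<sigma> ` {2..n}" by (auto simp: star_neighbours_def \<sigma>_def)
    have isg: "inj_on \<sigma> {2..n}"
    proof (rule inj_onI)
      fix i j assume "i \<in> {2..n}" "j \<in> {2..n}" "\<sigma> i = \<sigma> j"
      then have "\<sigma> i 1 = \<sigma> j 1" by simp
      then have "\<pi> i = \<pi> j" by (simp add: \<sigma>_def)
      then show "i = j" using ip by (auto dest: injD)
    qed
    define JS where "JS = J ` S"
    define KS where "KS = K ` S"
    define R where "R = {2..n} - (JS \<union> KS)"
    have sub: "JS \<subseteq> {2..n}" "KS \<subseteq> {2..n}" using J2 JS_def KS_def by auto
    have split: "{2..n} = R \<union> (JS \<union> KS)" using sub R_def by auto
    have dJK: "JS \<inter> KS = {}" using assms(8) JS_def KS_def S_def by simp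
    have fin: "finite R" "finite JS" "finite KS" using R_def JS_def KS_def S_def by auto
    have "(\<Sum>y\<in>star_neighbours n \<pi>. F y) = (\<Sum>i\<in>{2..n}. F (\<sigma> i))"
      unfolding Nb by (rule sum.reindex[OF isg, unfolded comp_def])
    also have "\<dots> = (\<Sum>i\<in>R. F (\<sigma> i)) + ((\<Sum>i\<in>JS. F (\<sigma> i)) + (\<Sum>i\<in>KS. F (\<sigma> i)))"
    proof -
      have "(\<Sum>i\<in>{2..n}. F (\<sigma> i)) = (\<Sum>i\<in>R \<union> (JS \<union> KS). F (\<sigma> i))"
        by (simp only: split[symmetric])
      also have "\<dots> = (\<Sum>i\<in>R. F (\<sigma> i)) + (\<Sum>i\<in>JS \<union> KS. F (\<sigma> i))"
        by (rule sum.union_disjoint) (use fin R_def in auto)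
      also have "(\<Sum>i\<in>JS \<union> KS. F (\<sigma> i)) = (\<Sum>i\<in>JS. F (\<sigma> i)) + (\<Sum>i\<in>KS. F (\<sigma> i))"
        by (rule sum.union_disjoint) (use fin dJK in auto)
      finally show ?thesis .
    qed
    also have "(\<Sum>i\<in>R. F (\<sigma> i)) = (\<Sum>i\<in>R. F \<pi>)"
    proof (rule sum.cong)
      fix i assume i: "i \<in> R"
      show "F (\<sigma> i) = F \<pi>" unfolding FP
      proof (rule prod.cong)
        fix s assume s: "s \<in> S"
        have "i \<noteq> J s" "i \<noteq> K s" using i s R_def JS_def KS_def by auto
        then show "g (\<sigma> i) s = g \<pi> s" using J2[OF s]
          unfolding g_def \<sigma>_def by (intro gt_other) auto
      qed simp
    qed simp
    also have "(\<Sum>i\<in>R. F \<pi>) = real (card R) * F \<pi>" by simp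
    also have "(\<Sum>i\<in>JS. F (\<sigma> i)) = (\<Sum>t\<in>S. F (\<sigma> (J t)))"
      unfolding JS_def using assms(6) S_def by (simp add: sum.reindex)
    also have "(\<Sum>i\<in>KS. F (\<sigma> i)) = (\<Sum>t\<in>S. F (\<sigma> (K t)))"
      unfolding KS_def using assms(7) S_def by (simp add: sum.reindex)
    also have "(\<Sum>t\<in>S. F (\<sigma> (J t))) + (\<Sum>t\<in>S. F (\<sigma> (K t))) = real m * F \<pi>"
    proof -
      have finS: "finite S" using S_def by simp
      have rem: "F (\<sigma> i) = g (\<sigma> i) t * (\<Prod>s\<in>S-{t}. g \<pi> s)"
        if t: "t \<in> S" and it: "i = J t \<or> i = K t" for t i
      proof -
        have "F (\<sigma> i) = g (\<sigma> i) t * (\<Prod>s\<in>S-{t}. g (\<sigma> i) s)"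
          unfolding FP using prod.remove[OF finS t] .
        also have "(\<Prod>s\<in>S-{t}. g (\<sigma> i) s) = (\<Prod>s\<in>S-{t}. g \<pi> s)"
        proof (rule prod.cong)
          fix s assume s: "s \<in> S - {t}"
          then have "i \<noteq> J s" "i \<noteq> K s" using it Jinj[of s t] JK[of s t] JK[of t s] t by auto
          moreover have "J s \<noteq> 1" "K s \<noteq> 1" using J2[of s] s by auto
          ultimately show "g (\<sigma> i) s = g \<pi> s" unfolding g_def \<sigma>_def by (rule gt_other)
        qed simp
        finally show ?thesis .
      qed
      have "(\<Sum>t\<in>S. F (\<sigma> (J t))) + (\<Sum>t\<in>S. F (\<sigma> (K t)))
          = (\<Sum>t\<in>S. (g (\<sigma> (J t)) t + g (\<sigma> (K t)) t) * (\<Prod>s\<in>S-{t}. g \<pi> s))"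
        by (simp add: sum.distrib[symmetric] rem distrib_right)
      also have "\<dots> = (\<Sum>t\<in>S. g \<pi> t * (\<Prod>s\<in>S-{t}. g \<pi> s))"
      proof (rule sum.cong)
        fix t assume t: "t \<in> S"
        have "J t \<noteq> K t" using JK[OF t t] .
        moreover have "J t \<noteq> 1" "K t \<noteq> 1" using J2[OF t] by auto
        ultimately have "g (\<sigma> (J t)) t + g (\<sigma> (K t)) t = g \<pi> t"
          unfolding g_def \<sigma>_def using gt_swap[OF ip] by blast
        then show "(g (\<sigma> (J t)) t + g (\<sigma> (K t)) t) * (\<Prod>s\<in>S-{t}. g \<pi> s) = g \<pi> t * (\<Prod>s\<in>S-{t}. g \<pi> s)"
          by simp
      qed simp
      also have "\<dots> = (\<Sum>t\<in>S. F \<pi>)"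
        by (rule sum.cong) (simp_all add: FP prod.remove[OF finS])
      also have "\<dots> = real m * F \<pi>" using S_def by simp
      finally show ?thesis .
    qed
    finally have sumeq: "(\<Sum>y\<in>star_neighbours n \<pi>. F y) = real (card R) * F \<pi> + real m * F \<pi>"
      by (simp add: add.assoc)
    have cJ: "card JS = m" "card KS = m"
      using assms(6,7) S_def JS_def KS_def by (simp_all add: card_image)
    have cU: "card (JS \<union> KS) = 2 * m" using card_Un_disjoint[OF fin(2,3) dJK] cJ by simp
    have sub2: "JS \<union> KS \<subseteq> {2..n}" using sub by auto
    have cR: "card R = (n - 1) - 2 * m"
      unfolding R_def using card_Diff_subset[OF finite_subset[OF sub2] sub2] cU by simp
    have le: "2 * m \<le> n - 1" using card_mono[OF _ sub2] cU by simp
    have cr: "real (card R) = real n - 1 - 2 * real m" proof - have "Suc (2*m) \<le> n" using le assms(1) by linarith then show ?thesis using cR by (simp add: of_nat_diff) qed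
    show ?thesis unfolding sumeq cr by (simp add: algebra_simps)
  qed
  show ?thesis unfolding is_eigenfunction_def using ex eq F_def by simp
qed

end
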